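(* Let $H$ be a $3$-uniform hypergraph and let $C_1,\ldots,C_k$ be cycles in its $1$-skeleton $\mathcal S(H)$. Set $m=\bigl|\bigcup_{i=1}^k V(C_i)\bigr|$, and suppose $p\le \frac1{k+m}$ and $\epsilon<\frac1{k(k+m)}$ are parameters such that each cycle $C_i$ is $(p,\epsilon)$-disk-coverable in $H$. Then there are disks $D_1,\ldots,D_k\subseteq H$ with $\partial D_i=C_i$ for each $i$, such that for any $i\ne j$ the simplicial complexes associated to $D_i$ and $D_j$ intersect exactly in the one-dimensional simplicial complex $C_i\cap C_j$.
   Context: A $3$-uniform hypergraph is identified with the $2$-dimensional simplicial complex whose facets are its edges. The $1$-skeleton $\mathcal S(H)$ of $H$ is the graph on $V(H)$ whose edges are the pairs $xy$ with $xyz\in E(H)$ for some $z$. A disk is a $3$-uniform hypergraph $D$ whose associated simplicial complex is homeomorphic to the closed $2$-dimensional disk; its boundary $\partial D$ is the cycle in $\mathcal S(D)$ forming the topological boundary, and its interior vertex set is $V^\circ(D)=V(D)\setminus V(\partial D)$. A disk $D$ with at least two edges is boundary-inducing if $\partial D$ is an induced subgraph of $\mathcal S(D)$. For $p,\epsilon\in(0,1)$ and a cycle $C\subseteq\mathcal S(H)$: choose $U\subseteq V(H)$ by including each vertex independently with probability $p$, and let $A_C$ be the event that there is a boundary-inducing disk $D\subseteq H$ with $\partial D=C$ and $V^\circ(D)\subseteq U$. The cycle $C$ is $(p,\epsilon)$-disk-coverable if $\Pr[A_C]\ge 1-\epsilon$. *)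

theory Defs
  imports "HOL-Analysis.Analysis"
begin

definition three_uniform :: "'a set set \<Rightarrow> bool" where
  "three_uniform H \<longleftrightarrow> finite H \<and> (\<forall>e\<in>H. card e = 3)"

definition hverts :: "'a set set \<Rightarrow> 'a set" where
  "hverts H = \<Union>H"

definition skel :: "'a set set \<Rightarrow> 'a set set" where
  "skel H = {{x, y} | x y. x \<noteq> y \<and> (\<exists>e\<in>H. x \<in> e \<and> y \<in> e)}"

definition is_cycle :: "'a set set \<Rightarrow> bool" where
  "is_cycle C \<longleftrightarrow> (\<exists>xs. distinct xs \<and> length xs \<ge> 3 \<and>
      C = {{xs ! i, xs ! ((i + 1) mod length xs)} | i. i < length xs})"

text \<open>Geometric realisation of the simplicial complex whose facets are the edges of D:
  points are barycentric-coordinate functions supported on a facet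
  (subspace of the product topology on 'a \<Rightarrow> real).\<close>
definition realization :: "'a set set \<Rightarrow> ('a \<Rightarrow> real) set" where
  "realization D = {f. (\<forall>v. 0 \<le> f v) \<and> (\<exists>e\<in>D. {v. f v \<noteq> 0} \<subseteq> e \<and> sum f e = 1)}"

definition is_disk :: "'a set set \<Rightarrow> bool" where
  "is_disk D \<longleftrightarrow> three_uniform D \<and> realization D homeomorphic cball (0::complex) 1"

definition bd :: "'a set set \<Rightarrow> 'a set set" where
  "bd D = {s. card s = 2 \<and> card {e\<in>D. s \<subseteq> e} = 1}"

definition interior_verts :: "'a set set \<Rightarrow> 'a set" where
  "interior_verts D = hverts D - \<Union>(bd D)"

definition boundary_inducing :: "'a set set \<Rightarrow> bool" where
  "boundary_inducing D \<longleftrightarrow> card D \<ge> 2 \<and>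
     (\<forall>s\<in>skel D. s \<subseteq> \<Union>(bd D) \<longrightarrow> s \<in> bd D)"

definition rand_subset_prob :: "real \<Rightarrow> 'a set \<Rightarrow> ('a set \<Rightarrow> bool) \<Rightarrow> real" where
  "rand_subset_prob p V P =
     (\<Sum>U\<in>Pow V. if P U then p ^ card U * (1 - p) ^ card (V - U) else 0)"

definition disk_event :: "'a set set \<Rightarrow> 'a set set \<Rightarrow> 'a set \<Rightarrow> bool" where
  "disk_event H C U \<longleftrightarrow> (\<exists>D\<subseteq>H. is_disk D \<and> boundary_inducing D \<and> bd D = C
       \<and> interior_verts D \<subseteq> U)"

definition disk_coverable :: "'a set set \<Rightarrow> real \<Rightarrow> real \<Rightarrow> 'a set set \<Rightarrow> bool" where
  "disk_coverable H p \<epsilon> C \<longleftrightarrow> rand_subset_prob p (hverts H) (disk_event H C) \<ge> 1 - \<epsilon>"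

definition simplices :: "'a set set \<Rightarrow> 'a set set" where
  "simplices D = {s. s \<noteq> {} \<and> (\<exists>e\<in>D. s \<subseteq> e)}"

definition graph_inter_complex :: "'a set set \<Rightarrow> 'a set set \<Rightarrow> 'a set set" where
  "graph_inter_complex C C' = {{v} | v. v \<in> \<Union>C \<inter> \<Union>C'} \<union> (C \<inter> C')"

end

theory Submission
  imports Defs
begin


definition QS :: "(nat \<Rightarrow> real) \<Rightarrow> nat \<Rightarrow> 'a set \<Rightarrow> (('a \<Rightarrow> nat) \<Rightarrow> bool) \<Rightarrow> real" where
  "QS q K X F = (\<Sum>g\<in>PiE X (\<lambda>_. {..K}). if F g then \<Prod>x\<in>X. q (g x) else 0)"

lemma QS_insert:
  assumes "finite X" "x \<notin> X"
  shows "QS q K (insert x X) F = (\<Sum>c\<in>{..K}. q c * QS q K X (\<lambda>g. F (g(x:=c))))"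
proof -
  have "QS q K (insert x X) F =
     (\<Sum>(c,g)\<in>{..K} \<times> PiE X (\<lambda>_. {..K}). if F (g(x:=c)) then \<Prod>v\<in>insert x X. q ((g(x:=c)) v) else 0)"
    unfolding QS_def using assms
    by (intro sum.reindex_bij_witness[of _ "\<lambda>(y,g). g(x := y)" "\<lambda>g. (g x, g(x := undefined))"])
       (auto simp: PiE_def extensional_def)
  also have "\<dots> = (\<Sum>(c,g)\<in>{..K} \<times> PiE X (\<lambda>_. {..K}). q c * (if F (g(x:=c)) then \<Prod>v\<in>X. q (g v) else 0))"
  proof (intro sum.cong refl, clarify)
    fix c g assume "g \<in> PiE X (\<lambda>_. {..K})"
    have "(\<Prod>v\<in>insert x X. q ((g(x:=c)) v)) = q c * (\<Prod>v\<in>X. q ((g(x:=c)) v))"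
      using assms by simp
    also have "(\<Prod>v\<in>X. q ((g(x:=c)) v)) = (\<Prod>v\<in>X. q (g v))"
      using assms by (intro prod.cong) auto
    finally show "(if F (g(x:=c)) then \<Prod>v\<in>insert x X. q ((g(x:=c)) v) else 0) =
       q c * (if F (g(x:=c)) then \<Prod>v\<in>X. q (g v) else 0)" by simp
  qed
  also have "\<dots> = (\<Sum>c\<in>{..K}. \<Sum>g\<in>PiE X (\<lambda>_. {..K}). q c * (if F (g(x:=c)) then \<Prod>v\<in>X. q (g v) else 0))"
    by (subst sum.cartesian_product) auto
  also have "\<dots> = (\<Sum>c\<in>{..K}. q c * QS q K X (\<lambda>g. F (g(x:=c))))"
    unfolding QS_def by (simp add: sum_distrib_left)
  finally show ?thesis .
qed

lemma QS_cong:
  assumes "\<And>g. g \<in> PiE X (\<lambda>_. {..K}) \<Longrightarrow> F g = G g"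
  shows "QS q K X F = QS q K X G"
  unfolding QS_def using assms by (intro sum.cong) auto

lemma QS_empty: "QS q K {} F = (if F (\<lambda>_. undefined) then 1 else 0)"
  unfolding QS_def by simp



lemma RP_cong:
  assumes "\<And>U. U \<subseteq> X \<Longrightarrow> P U = Q U"
  shows "rand_subset_prob p X P = rand_subset_prob p X Q"
  unfolding rand_subset_prob_def using assms by (intro sum.cong) auto

lemma RP_insert:
  assumes "finite X" "x \<notin> X"
  shows "rand_subset_prob p (insert x X) P =
     p * rand_subset_prob p X (\<lambda>U. P (insert x U)) + (1 - p) * rand_subset_prob p X P"
proof -
  let ?w = "\<lambda>Y U. p ^ card U * (1 - p) ^ card (Y - U)"
  have d: "Pow X \<inter> insert x ` Pow X = {}" using assms by auto
  have inj: "inj_on (insert x) (Pow X)"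
  proof (rule inj_onI)
    fix A B assume "A \<in> Pow X" "B \<in> Pow X" "insert x A = insert x B"
    then show "A = B" using assms(2) by (metis Diff_insert_absorb PowD subsetD)
  qed
  have "rand_subset_prob p (insert x X) P =
     (\<Sum>U\<in>Pow X. if P U then ?w (insert x X) U else 0) +
     (\<Sum>U\<in>insert x ` Pow X. if P U then ?w (insert x X) U else 0)"
    unfolding rand_subset_prob_def Pow_insert using assms d
    by (intro sum.union_disjoint) auto
  also have "(\<Sum>U\<in>insert x ` Pow X. if P U then ?w (insert x X) U else 0) =
     (\<Sum>U\<in>Pow X. if P (insert x U) then ?w (insert x X) (insert x U) else 0)"
    using inj by (simp add: sum.reindex)
  also have "\<dots> = (\<Sum>U\<in>Pow X. p * (if P (insert x U) then ?w X U else 0))"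
  proof (intro sum.cong refl)
    fix U assume U: "U \<in> Pow X"
    then have f: "finite U" using assms finite_subset by auto
    have "x \<notin> U" using U assms by auto
    then have "card (insert x U) = Suc (card U)" using f by simp
    moreover have "insert x X - insert x U = X - U" using U assms by auto
    ultimately show "(if P (insert x U) then ?w (insert x X) (insert x U) else 0) =
       p * (if P (insert x U) then ?w X U else 0)" by simp
  qed
  also have "(\<Sum>U\<in>Pow X. if P U then ?w (insert x X) U else 0) =
      (\<Sum>U\<in>Pow X. (1 - p) * (if P U then ?w X U else 0))"
  proof (intro sum.cong refl)
    fix U assume U: "U \<in> Pow X"
    have "insert x X - U = insert x (X - U)" using U assms by auto
    moreover have "finite (X - U)" using assms by auto
    moreover have "x \<notin> X - U" using assms by auto
    ultimately have "card (insert x X - U) = Suc (card (X - U))" by simp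
    then show "(if P U then ?w (insert x X) U else 0) = (1 - p) * (if P U then ?w X U else 0)"
      by simp
  qed
  finally show ?thesis unfolding rand_subset_prob_def
    by (simp add: sum_distrib_left)
qed

lemma RP_empty: "rand_subset_prob p {} P = (if P {} then 1 else 0)"
  unfolding rand_subset_prob_def by simp

lemma RP_mono:
  assumes "0 \<le> p" "p \<le> 1" "\<And>U. U \<subseteq> X \<Longrightarrow> P U \<Longrightarrow> Q U"
  shows "rand_subset_prob p X P \<le> rand_subset_prob p X Q"
  unfolding rand_subset_prob_def using assms by (intro sum_mono) auto

lemma RP_restrict:
  assumes "finite X" "finite Y" "X \<inter> Y = {}"
  shows "rand_subset_prob p (X \<union> Y) (\<lambda>U. P U \<and> U \<inter> Y = {}) = (1 - p) ^ card Y * rand_subset_prob p X P"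
  using assms(2,3)
proof (induction Y rule: finite_induct)
  case empty then show ?case by simp
next
  case (insert y Y)
  have yn: "y \<notin> X \<union> Y" using insert by auto
  have "rand_subset_prob p (X \<union> insert y Y) (\<lambda>U. P U \<and> U \<inter> insert y Y = {}) =
     p * rand_subset_prob p (X \<union> Y) (\<lambda>U. P (insert y U) \<and> insert y U \<inter> insert y Y = {}) +
     (1 - p) * rand_subset_prob p (X \<union> Y) (\<lambda>U. P U \<and> U \<inter> insert y Y = {})"
    using RP_insert[OF _ yn, of p] assms insert by simp
  also have "rand_subset_prob p (X \<union> Y) (\<lambda>U. P (insert y U) \<and> insert y U \<inter> insert y Y = {}) = 0"
    unfolding rand_subset_prob_def by simp
  also have "rand_subset_prob p (X \<union> Y) (\<lambda>U. P U \<and> U \<inter> insert y Y = {}) =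
     rand_subset_prob p (X \<union> Y) (\<lambda>U. P U \<and> U \<inter> Y = {})"
    using yn by (intro RP_cong) auto
  also have "\<dots> = (1 - p) ^ card Y * rand_subset_prob p X P" using insert by simp
  finally show ?case using insert by simp
qed

lemma RP_indep:
  assumes "finite X" "finite Z" "X \<inter> Z = {}" "\<And>U. U \<subseteq> X \<union> Z \<Longrightarrow> P U = P (U \<inter> X)"
  shows "rand_subset_prob p (X \<union> Z) P = rand_subset_prob p X P"
  using assms(2,3,4)
proof (induction Z rule: finite_induct)
  case empty then show ?case by simp
next
  case (insert z Z)
  have zn: "z \<notin> X \<union> Z" using insert by auto
  have e: "rand_subset_prob p (X \<union> Z) (\<lambda>U. P (insert z U)) = rand_subset_prob p (X \<union> Z) P"
  proof (intro RP_cong)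
    fix U assume U: "U \<subseteq> X \<union> Z"
    have h: "\<And>U. U \<subseteq> X \<union> insert z Z \<Longrightarrow> P U = P (U \<inter> X)" by (rule insert.prems(2))
    have "P (insert z U) = P (insert z U \<inter> X)" by (rule h) (use U in auto)
    also have "insert z U \<inter> X = U \<inter> X" using insert by auto
    also have "P (U \<inter> X) = P U" by (rule h[symmetric]) (use U in auto)
    finally show "P (insert z U) = P U" .
  qed
  have "rand_subset_prob p (X \<union> insert z Z) P =
     p * rand_subset_prob p (X \<union> Z) (\<lambda>U. P (insert z U)) + (1 - p) * rand_subset_prob p (X \<union> Z) P"
    using RP_insert[OF _ zn, of p] assms insert by simp
  also have "\<dots> = rand_subset_prob p (X \<union> Z) P" unfolding e by (simp add: algebra_simps)
  also have "\<dots> = rand_subset_prob p X P"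
  proof (rule insert.IH)
    show "X \<inter> Z = {}" using insert.prems(1) by auto
    fix U assume "U \<subseteq> X \<union> Z"
    then show "P U = P (U \<inter> X)" by (intro insert.prems(2)) auto
  qed
  finally show ?case .
qed

lemma QS_marginal:
  assumes "finite X" "i \<le> K" "q i = p" "(\<Sum>c\<in>{..K} - {i}. q c) = 1 - p"
  shows "QS q K X (\<lambda>g. P {v\<in>X. g v = i}) = rand_subset_prob p X P"
  using assms(1)
proof (induction X arbitrary: P rule: finite_induct)
  case empty then show ?case by (simp add: QS_empty RP_empty)
next
  case (insert x X)
  have "QS q K (insert x X) (\<lambda>g. P {v\<in>insert x X. g v = i}) =
     (\<Sum>c\<in>{..K}. q c * QS q K X (\<lambda>g. P {v\<in>insert x X. (g(x:=c)) v = i}))"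
    by (rule QS_insert[OF insert(1,2)])
  also have "\<dots> = (\<Sum>c\<in>{..K}. q c * (if c = i then rand_subset_prob p X (\<lambda>U. P (insert x U))
                                      else rand_subset_prob p X P))"
  proof (intro sum.cong refl)
    fix c
    have "QS q K X (\<lambda>g. P {v\<in>insert x X. (g(x:=c)) v = i}) =
          QS q K X (\<lambda>g. (if c = i then (\<lambda>U. P (insert x U)) else P) {v\<in>X. g v = i})"
    proof (intro QS_cong)
      fix g
      have "{v\<in>insert x X. (g(x:=c)) v = i} = (if c = i then insert x {v\<in>X. g v = i} else {v\<in>X. g v = i})"
        using insert by auto
      then show "P {v\<in>insert x X. (g(x:=c)) v = i} = (if c = i then (\<lambda>U. P (insert x U)) else P) {v\<in>X. g v = i}"
        by simp
    qed
    also have "\<dots> = (if c = i then rand_subset_prob p X (\<lambda>U. P (insert x U)) else rand_subset_prob p X P)"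
      using insert.IH by simp
    finally show "q c * QS q K X (\<lambda>g. P {v\<in>insert x X. (g(x:=c)) v = i}) = q c * (if c = i then rand_subset_prob p X (\<lambda>U. P (insert x U))
                                      else rand_subset_prob p X P)" by simp
  qed
  also have "\<dots> = q i * rand_subset_prob p X (\<lambda>U. P (insert x U)) +
       (\<Sum>c\<in>{..K} - {i}. q c * rand_subset_prob p X P)"
    using assms(2) by (subst sum.remove[of _ i]) auto
  also have "\<dots> = p * rand_subset_prob p X (\<lambda>U. P (insert x U)) + (1 - p) * rand_subset_prob p X P"
    using assms(3,4) by (simp add: sum_distrib_right[symmetric])
  also have "\<dots> = rand_subset_prob p (insert x X) P" by (rule RP_insert[OF insert(1,2), symmetric])
  finally show ?case .
qed

lemma QS_total:
  assumes "finite X" "(\<Sum>c\<in>{..K}. q c) = 1"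
  shows "QS q K X (\<lambda>_. True) = 1"
  using assms(1)
proof (induction X rule: finite_induct)
  case empty then show ?case by (simp add: QS_empty)
next
  case (insert x X)
  then show ?case using QS_insert[OF insert(1,2), of q K "\<lambda>_. True"] assms(2)
    by (simp add: sum_distrib_right[symmetric])
qed

lemma QS_union_bound:
  fixes k :: nat
  assumes "\<And>c. 0 \<le> q c"
  shows "QS q K X (\<lambda>g. \<exists>i<k. F i g) \<le> (\<Sum>i<k. QS q K X (F i))"
proof -
  have "QS q K X (\<lambda>g. \<exists>i<k. F i g) \<le> (\<Sum>g\<in>PiE X (\<lambda>_. {..K}). \<Sum>i<k. if F i g then \<Prod>x\<in>X. q (g x) else 0)"
    unfolding QS_def
  proof (intro sum_mono)
    fix g
    show "(if \<exists>i<k. F i g then \<Prod>x\<in>X. q (g x) else 0) \<le> (\<Sum>i<k. if F i g then \<Prod>x\<in>X. q (g x) else 0)"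
    proof (cases "\<exists>i<k. F i g")
      case True
      then obtain i where i: "i < k" "F i g" by blast
      have "(\<Sum>i<k. if F i g then \<Prod>x\<in>X. q (g x) else 0) \<ge> (if F i g then \<Prod>x\<in>X. q (g x) else 0)"
        using i assms by (intro member_le_sum) (simp_all add: prod_nonneg)
      then show ?thesis using i True by simp
    next
      case False then show ?thesis using assms by (auto intro!: sum_nonneg prod_nonneg)
    qed
  qed
  also have "\<dots> = (\<Sum>i<k. QS q K X (F i))" unfolding QS_def by (rule sum.swap)
  finally show ?thesis .
qed

lemma QS_pos_exists:
  assumes "QS q K X F > 0"
  shows "\<exists>g\<in>PiE X (\<lambda>_. {..K}). F g"
proof (rule ccontr)
  assume "\<not> ?thesis"
  then have "QS q K X F = 0" unfolding QS_def by (intro sum.neutral) auto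
  then show False using assms by simp
qed

lemma QS_compl:
  assumes "finite X" "(\<Sum>c\<in>{..K}. q c) = 1"
  shows "QS q K X F = 1 - QS q K X (\<lambda>g. \<not> F g)"
proof -
  have "QS q K X F + QS q K X (\<lambda>g. \<not> F g) = QS q K X (\<lambda>_. True)"
    unfolding QS_def sum.distrib[symmetric] by (intro sum.cong) auto
  then show ?thesis using QS_total[OF assms] by simp
qed



lemma realization_union: "realization (A \<union> B) = realization A \<union> realization B"
  unfolding realization_def by blast

lemma realization_single_eq:
  "realization {e} = {f. (\<forall>v. 0 \<le> f v) \<and> (\<forall>v. v \<notin> e \<longrightarrow> f v = 0) \<and> (\<Sum>i\<in>e. f i) = 1}"
  unfolding realization_def by auto

lemma closed_realization_single: "closed (realization {e})"
proof -
  have c1: "closed {f::'a \<Rightarrow> real. \<forall>v. 0 \<le> f v}"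
    by (intro closed_Collect_all closed_Collect_le) (auto intro: continuous_on_const)
  have c2: "closed {f::'a \<Rightarrow> real. \<forall>v. v \<notin> e \<longrightarrow> f v = 0}"
    by (intro closed_Collect_all closed_Collect_imp closed_Collect_eq) (auto intro: continuous_on_const)
  have c3: "closed {f::'a \<Rightarrow> real. (\<Sum>i\<in>e. f i) = 1}"
    by (intro closed_Collect_eq continuous_on_sum) (auto intro: continuous_on_const)
  have "realization {e} = {f::'a \<Rightarrow> real. \<forall>v. 0 \<le> f v} \<inter> {f. \<forall>v. v \<notin> e \<longrightarrow> f v = 0} \<inter> {f. (\<Sum>i\<in>e. f i) = 1}"
    unfolding realization_single_eq by blast
  then show ?thesis using c1 c2 c3 by (simp add: closed_Int)
qed

lemma realization_Union: "realization D = (\<Union>e\<in>D. realization {e})"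
  unfolding realization_def by blast

lemma closed_realization: "finite D \<Longrightarrow> closed (realization D)"
  unfolding realization_Union[of D] by (intro closed_UN) (simp_all add: closed_realization_single)

lemma not_collinear_cball: "\<not> collinear (cball (0::complex) 1)"
  by (simp add: collinear_aff_dim aff_dim_cball)

lemma connected_homeo_diff:
  assumes "R homeomorphic cball (0::complex) 1" "finite S" "S \<subseteq> R"
  shows "connected (R - S)"
proof -
  obtain h g where hg: "homeomorphism R (cball (0::complex) 1) h g"
    using assms(1) unfolding homeomorphic_def by blast
  have c: "connected (cball (0::complex) 1 - h ` S)"
    by (intro connected_convex_diff_countable convex_cball not_collinear_cball countable_finite finite_imageI assms(2))
  have cont: "continuous_on (cball (0::complex) 1 - h ` S) g"
    using hg unfolding homeomorphism_def by (meson Diff_subset continuous_on_subset)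
  have hg1: "\<And>x. x \<in> R \<Longrightarrow> g (h x) = x" "\<And>y. y \<in> cball 0 1 \<Longrightarrow> h (g y) = y"
    "\<And>x. x \<in> R \<Longrightarrow> h x \<in> cball 0 1" "\<And>y. y \<in> cball 0 1 \<Longrightarrow> g y \<in> R"
    using hg unfolding homeomorphism_def by auto
  have "g ` (cball (0::complex) 1 - h ` S) = R - S"
  proof
    show "g ` (cball 0 1 - h ` S) \<subseteq> R - S"
    proof
      fix x assume "x \<in> g ` (cball 0 1 - h ` S)"
      then obtain y where y: "y \<in> cball 0 1" "y \<notin> h ` S" "x = g y" by blast
      have "x \<notin> S"
      proof
        assume "x \<in> S" then have "h x \<in> h ` S" by blast
        then show False using y hg1(2)[of y] by simp
      qed
      then show "x \<in> R - S" using y hg1(4) by blast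
    qed
  next
    show "R - S \<subseteq> g ` (cball 0 1 - h ` S)"
    proof
      fix x assume x: "x \<in> R - S"
      have "h x \<notin> h ` S"
      proof
        assume "h x \<in> h ` S" then obtain s where s: "s \<in> S" "h x = h s" by blast
        then have "g (h x) = g (h s)" by simp
        then have "x = s" using hg1(1) x s(1) assms(3) by auto
        then show False using x s by blast
      qed
      then have "h x \<in> cball 0 1 - h ` S" using x hg1(3) by blast
      then show "x \<in> g ` (cball 0 1 - h ` S)" using hg1(1)[of x] x by (metis DiffD1 image_eqI)
    qed
  qed
  then show ?thesis using connected_continuous_image[OF cont c] by simp
qed



lemma bary_in:
  assumes "card e = 3"
  shows "(\<lambda>u. if u \<in> e then 1/3 else (0::real)) \<in> realization {e}"
proof -
  have "finite e" using assms by (metis card.infinite zero_neq_numeral)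
  then have "(\<Sum>i\<in>e. (if i \<in> e then 1/3 else (0::real))) = 1" using assms by simp
  then show ?thesis unfolding realization_single_eq by auto
qed

lemma bary_notin:
  assumes "card e = 3"
  shows "(\<lambda>u. if u \<in> e then 1/3 else (0::real)) \<notin> (\<lambda>v u. if u = v then 1 else (0::real)) ` T"
proof
  assume "(\<lambda>u. if u \<in> e then 1/3 else (0::real)) \<in> (\<lambda>v u. if u = v then 1 else (0::real)) ` T"
  then obtain v where v: "(\<lambda>u. if u \<in> e then 1/3 else (0::real)) = (\<lambda>u. if u = v then 1 else (0::real))" by blast
  then have "(if v \<in> e then 1/3 else (0::real)) = 1" by (metis (mono_tags))
  then show False by (simp split: if_splits)
qed

lemma ne_imp: "x \<in> A \<Longrightarrow> A \<noteq> {}" by blast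

lemma no_free_triangle:
  assumes "is_disk D" "card D \<ge> 2" "T \<in> D" "\<And>s. s \<subseteq> T \<Longrightarrow> card s = 2 \<Longrightarrow> s \<in> bd D"
  shows False
proof -
  have fin: "finite D" and c3: "\<And>e. e \<in> D \<Longrightarrow> card e = 3"
    using assms(1) unfolding is_disk_def three_uniform_def by auto
  have hom: "realization D homeomorphic cball (0::complex) 1" using assms(1) unfolding is_disk_def by auto
  define D' where "D' = D - {T}"
  have "D \<noteq> {T}" using assms(2) by auto
  then obtain e0 where e0: "e0 \<in> D'" using assms(3) unfolding D'_def by blast
  have finT: "finite T" using c3[OF assms(3)] by (metis card.infinite zero_neq_numeral)
  have inter: "card (e \<inter> T) \<le> 1" if e: "e \<in> D'" for e
  proof (rule ccontr)
    assume "\<not> card (e \<inter> T) \<le> 1"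
    then have h2: "2 \<le> card (e \<inter> T)" by simp
    obtain s where s: "s \<subseteq> e \<inter> T" "card s = 2" "finite s"
      by (rule obtain_subset_with_card_n[OF h2])
    then have "s \<in> bd D" using assms(4) by auto
    then have c1: "card {e\<in>D. s \<subseteq> e} = 1" unfolding bd_def by auto
    have "{T, e} \<subseteq> {e\<in>D. s \<subseteq> e}" using s e assms(3) unfolding D'_def by auto
    moreover have "finite {e\<in>D. s \<subseteq> e}" using fin by auto
    ultimately have "card {T, e} \<le> 1" using c1 card_mono by metis
    moreover have "T \<noteq> e" using e unfolding D'_def by auto
    ultimately show False by simp
  qed
  define S where "S = (\<lambda>v u. if u = v then 1 else (0::real)) ` T"
  have finS: "finite S" unfolding S_def using finT by simp
  have SA: "S \<subseteq> realization {T}"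
  proof
    fix f assume "f \<in> S"
    then obtain v where v: "v \<in> T" "f = (\<lambda>u. if u = v then 1 else (0::real))" unfolding S_def by blast
    have "(\<Sum>i\<in>T. f i) = 1" using v finT by simp
    then show "f \<in> realization {T}" unfolding realization_single_eq using v by auto
  qed
  have RD: "realization D = realization {T} \<union> realization D'"
    using assms(3) unfolding D'_def realization_union[symmetric] by (metis insert_Diff insert_is_Un)
  have AB: "realization {T} \<inter> realization D' \<subseteq> S"
  proof
    fix f assume f: "f \<in> realization {T} \<inter> realization D'"
    have fT: "f \<in> realization {T}" and fD: "f \<in> realization D'" using f by auto
    from fT have "(\<forall>v. 0 \<le> f v) \<and> (\<forall>v. v \<notin> T \<longrightarrow> f v = 0) \<and> (\<Sum>i\<in>T. f i) = 1"
      unfolding realization_single_eq by simp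
    then have z: "\<And>v. v \<notin> T \<Longrightarrow> f v = 0" and s1: "(\<Sum>i\<in>T. f i) = 1"
      by auto
    from fD have "\<exists>e\<in>D'. {v. f v \<noteq> 0} \<subseteq> e \<and> sum f e = 1" unfolding realization_def by simp
    then obtain e where e: "e \<in> D'" "{v. f v \<noteq> 0} \<subseteq> e" by blast
    have sub: "{v. f v \<noteq> 0} \<subseteq> e \<inter> T" using e z by auto
    have "card {v. f v \<noteq> 0} \<le> card (e \<inter> T)" by (rule card_mono) (use finT sub in auto)
    then have "card {v. f v \<noteq> 0} \<le> 1" using inter[OF e(1)] by linarith
    moreover have "{v. f v \<noteq> 0} \<noteq> {}"
    proof
      assume "{v. f v \<noteq> 0} = {}"
      then have "(\<Sum>i\<in>T. f i) = 0" by (intro sum.neutral) auto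
      then show False using s1 by simp
    qed
    moreover have "finite {v. f v \<noteq> 0}" using sub finT finite_subset by blast
    ultimately have "card {v. f v \<noteq> 0} = 1" by (simp add: Suc_le_eq card_gt_0_iff le_antisym)
    then obtain v where v: "{v. f v \<noteq> 0} = {v}" using card_1_singletonE by blast
    have vT: "v \<in> T" using v sub by auto
    have "(\<Sum>i\<in>T. f i) = (\<Sum>i\<in>T. if i = v then f v else 0)"
      by (intro sum.cong refl) (use v in auto)
    also have "\<dots> = f v" using vT finT by simp
    finally have fv: "f v = 1" using s1 by simp
    have "f = (\<lambda>u. if u = v then 1 else (0::real))"
    proof
      fix u show "f u = (if u = v then 1 else 0)" using v fv by (cases "u = v") auto
    qed
    then show "f \<in> S" unfolding S_def using vT by blast
  qed
  have conn: "connected (realization D - S)"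
    using connected_homeo_diff[OF hom finS] SA RD by auto
  have clA: "closed (realization {T})" by (rule closed_realization_single)
  have clB: "closed (realization D')" using fin unfolding D'_def by (intro closed_realization) auto
  define bT where "bT = (\<lambda>u. if u \<in> T then 1/3 else (0::real))"
  have bT1: "bT \<in> realization {T}" unfolding bT_def by (rule bary_in[OF c3[OF assms(3)]])
  have bT2: "bT \<notin> S" unfolding bT_def S_def by (rule bary_notin[OF c3[OF assms(3)]])
  have nA: "realization {T} \<inter> (realization D - S) \<noteq> {}"
  proof -
    have "bT \<in> realization {T} \<inter> (realization D - S)" using bT1 bT2 RD by simp
    then show ?thesis by (rule ne_imp)
  qed
  have e0D: "e0 \<in> D" using e0 unfolding D'_def by auto
  have "realization {e0} \<subseteq> realization D'" using e0 unfolding realization_def by auto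
  define b0 where "b0 = (\<lambda>u. if u \<in> e0 then 1/3 else (0::real))"
  have b01: "b0 \<in> realization D'" unfolding b0_def using bary_in[OF c3[OF e0D]] \<open>realization {e0} \<subseteq> realization D'\<close> by (rule subsetD[rotated])
  have b02: "b0 \<notin> S" unfolding b0_def S_def by (rule bary_notin[OF c3[OF e0D]])
  have nB: "realization D' \<inter> (realization D - S) \<noteq> {}"
  proof -
    have "b0 \<in> realization D' \<inter> (realization D - S)" using b01 b02 RD by simp
    then show ?thesis by (rule ne_imp)
  qed
  have cov: "realization D - S \<subseteq> realization {T} \<union> realization D'" using RD by simp
  have dis: "realization {T} \<inter> realization D' \<inter> (realization D - S) = {}" using AB by blast
  have "\<exists>A B. closed A \<and> closed B \<and> realization D - S \<subseteq> A \<union> B \<and> A \<inter> B \<inter> (realization D - S) = {} \<and>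
          A \<inter> (realization D - S) \<noteq> {} \<and> B \<inter> (realization D - S) \<noteq> {}"
    using clA clB cov dis nA nB by blast
  then show False using conn unfolding connected_closed by blast
qed



lemma bd_in_edge:
  assumes "s \<in> bd D" shows "\<exists>e\<in>D. s \<subseteq> e" and "s \<noteq> {}"
proof -
  have c: "card {e\<in>D. s \<subseteq> e} = 1" and c2: "card s = 2" using assms unfolding bd_def by auto
  then have "{e\<in>D. s \<subseteq> e} \<noteq> {}" by (metis card.empty zero_neq_one)
  then show "\<exists>e\<in>D. s \<subseteq> e" by auto
  show "s \<noteq> {}" using c2 by auto
qed

lemma hverts_sub:
  assumes "interior_verts D \<subseteq> U"
  shows "hverts D \<subseteq> U \<union> \<Union>(bd D)"
  using assms unfolding interior_verts_def by auto

lemma edge_in_bd: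
  assumes "boundary_inducing D" "e \<in> D" "t \<subseteq> e" "card t = 2" "t \<subseteq> \<Union>(bd D)"
  shows "t \<in> bd D"
proof -
  obtain x y where t: "t = {x, y}" "x \<noteq> y" using assms(4) card_2_iff by metis
  have "t \<in> skel D" unfolding skel_def using t assms(2,3) by blast
  then show ?thesis using assms(1,5) unfolding boundary_inducing_def by blast
qed

lemma pair_inter:
  assumes di: "is_disk Di" "boundary_inducing Di" "bd Di = Ci" "interior_verts Di \<subseteq> Ui"
    and dj: "is_disk Dj" "boundary_inducing Dj" "bd Dj = Cj" "interior_verts Dj \<subseteq> Uj"
    and disj: "Ui \<inter> Uj = {}" "Ui \<inter> (\<Union>Ci \<union> \<Union>Cj) = {}" "Uj \<inter> (\<Union>Ci \<union> \<Union>Cj) = {}"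
  shows "simplices Di \<inter> simplices Dj = graph_inter_complex Ci Cj"
proof
  have hi: "hverts Di \<subseteq> Ui \<union> \<Union>Ci" using hverts_sub[OF di(4)] di(3) by simp
  have hj: "hverts Dj \<subseteq> Uj \<union> \<Union>Cj" using hverts_sub[OF dj(4)] dj(3) by simp
  have hv: "hverts Di \<inter> hverts Dj \<subseteq> \<Union>Ci \<inter> \<Union>Cj" using hi hj disj by blast
  show "simplices Di \<inter> simplices Dj \<subseteq> graph_inter_complex Ci Cj"
  proof
    fix s assume s: "s \<in> simplices Di \<inter> simplices Dj"
    then obtain e e' where ne: "s \<noteq> {}" and e: "e \<in> Di" "s \<subseteq> e" and e': "e' \<in> Dj" "s \<subseteq> e'"
      unfolding simplices_def by auto
    have c3: "card e = 3" using di(1) e(1) unfolding is_disk_def three_uniform_def by auto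
    have c3': "card e' = 3" using dj(1) e'(1) unfolding is_disk_def three_uniform_def by auto
    have fe: "finite e" using c3 by (metis card.infinite zero_neq_numeral)
    have sh: "s \<subseteq> hverts Di \<inter> hverts Dj" using e e' unfolding hverts_def by auto
    then have sC: "s \<subseteq> \<Union>Ci \<inter> \<Union>Cj" using hv by blast
    have fs: "finite s" using fe e(2) finite_subset by blast
    have cs: "card s \<le> 3" using card_mono[OF fe e(2)] c3 by simp
    have cs0: "card s \<noteq> 0" using fs ne by simp
    consider "card s = 1" | "card s = 2" | "card s = 3" using cs cs0 by linarith
    then show "s \<in> graph_inter_complex Ci Cj"
    proof cases
      case 1
      then obtain v where "s = {v}" using card_1_singletonE by blast
      then show ?thesis using sC unfolding graph_inter_complex_def by auto
    next
      case 2
      have "s \<in> bd Di" using edge_in_bd[OF di(2) e 2] sC di(3) by auto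
      moreover have "s \<in> bd Dj" using edge_in_bd[OF dj(2) e' 2] sC dj(3) by auto
      ultimately show ?thesis using di(3) dj(3) unfolding graph_inter_complex_def by auto
    next
      case 3
      have se: "s = e" using card_subset_eq[OF fe e(2)] 3 c3 by simp
      have ci2: "card Di \<ge> 2" using di(2) unfolding boundary_inducing_def by auto
      show ?thesis
      proof (rule FalseE, rule no_free_triangle[OF di(1) ci2 e(1)])
        fix t assume t: "t \<subseteq> e" "card t = 2"
        show "t \<in> bd Di" using edge_in_bd[OF di(2) e(1) t] t(1) se sC di(3) by auto
      qed
    qed
  qed
  show "graph_inter_complex Ci Cj \<subseteq> simplices Di \<inter> simplices Dj"
  proof
    fix s assume "s \<in> graph_inter_complex Ci Cj"
    then consider (v) v where "s = {v}" "v \<in> \<Union>Ci" "v \<in> \<Union>Cj" | (ed) "s \<in> Ci" "s \<in> Cj"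
      unfolding graph_inter_complex_def by blast
    then show "s \<in> simplices Di \<inter> simplices Dj"
    proof cases
      case v
      then obtain t t' where "t \<in> bd Di" "v \<in> t" "t' \<in> bd Dj" "v \<in> t'" using di(3) dj(3) by auto
      then show ?thesis using bd_in_edge v(1) unfolding simplices_def by blast
    next
      case ed
      then have "s \<in> bd Di" "s \<in> bd Dj" using di(3) dj(3) by auto
      then show ?thesis using bd_in_edge unfolding simplices_def by blast
    qed
  qed
qed



lemma RP_total:
  assumes "finite X" shows "rand_subset_prob p X (\<lambda>_. True) = 1"
  using assms
proof (induction X rule: finite_induct)
  case empty then show ?case by (simp add: RP_empty)
next
  case (insert x X)
  then show ?case using RP_insert[OF insert(1,2), of p "\<lambda>_. True"] by simp
qed

lemma RP_compl:
  assumes "finite X" shows "rand_subset_prob p X (\<lambda>U. \<not> P U) = 1 - rand_subset_prob p X P"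
proof -
  have "rand_subset_prob p X P + rand_subset_prob p X (\<lambda>U. \<not> P U) = rand_subset_prob p X (\<lambda>_. True)"
    unfolding rand_subset_prob_def sum.distrib[symmetric] by (intro sum.cong) auto
  then show ?thesis using RP_total[OF assms] by simp
qed

lemma RP_nonneg:
  assumes "0 \<le> p" "p \<le> 1" shows "0 \<le> rand_subset_prob p X P"
  unfolding rand_subset_prob_def using assms by (intro sum_nonneg) auto

theorem lemma3p1:
  fixes H :: "'a set set" and C :: "nat \<Rightarrow> 'a set set" and k :: nat
    and p \<epsilon> :: real
  assumes "three_uniform H"
    and "\<And>i. i < k \<Longrightarrow> is_cycle (C i) \<and> C i \<subseteq> skel H"
    and "0 < p" and "p < 1" and "0 < \<epsilon>" and "\<epsilon> < 1"
    and "p \<le> 1 / real (k + card (\<Union>i<k. \<Union>(C i)))"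
    and "\<epsilon> < 1 / real (k * (k + card (\<Union>i<k. \<Union>(C i))))"
    and "\<And>i. i < k \<Longrightarrow> disk_coverable H p \<epsilon> (C i)"
  shows "\<exists>D :: nat \<Rightarrow> 'a set set.
     (\<forall>i<k. D i \<subseteq> H \<and> is_disk (D i) \<and> bd (D i) = C i) \<and>
     (\<forall>i<k. \<forall>j<k. i \<noteq> j \<longrightarrow>
        simplices (D i) \<inter> simplices (D j) = graph_inter_complex (C i) (C j))"
proof (cases "k = 0")
  case True then show ?thesis by (intro exI[of _ "\<lambda>_. {}"]) simp
next
  case False
  then have k1: "real k \<ge> 1" by simp
  define W where "W = (\<Union>i<k. \<Union>(C i))"
  define V where "V = hverts H"
  define V' where "V' = V - W"
  define m where "m = card W"
  have finH: "finite H" and c3: "\<And>e. e \<in> H \<Longrightarrow> card e = 3"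
    using assms(1) unfolding three_uniform_def by auto
  have finV: "finite V" unfolding V_def hverts_def using finH c3
    by (metis card.infinite finite_Union zero_neq_numeral)
  have skelsub: "\<Union>(skel H) \<subseteq> V" unfolding skel_def V_def hverts_def by auto
  have CV: "\<Union>(C i) \<subseteq> V" if "i < k" for i using assms(2)[OF that] skelsub by blast
  have WV: "W \<subseteq> V" unfolding W_def using CV by blast
  have finW: "finite W" using finite_subset[OF WV finV] .
  have finV': "finite V'" unfolding V'_def using finV by simp
  have CW: "\<Union>(C i) \<subseteq> W" if "i < k" for i unfolding W_def using that by blast
  have km: "real k + real m > 0" using k1 by simp
  have pkm: "p * (real k + real m) \<le> 1"
    using assms(7) km unfolding W_def[symmetric] m_def[symmetric] by (simp add: field_simps)
  have X0: "real k * (real k + real m) > 0" using km k1 by simp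
  have e8: "\<epsilon> < 1 / (real k * (real k + real m))"
    using assms(8) unfolding W_def[symmetric] m_def[symmetric] by simp
  have ekm: "\<epsilon> * (real k * (real k + real m)) < 1"
    using e8 pos_less_divide_eq[OF X0] by blast
  have kp: "real k * p \<le> 1" using pkm assms(3) by (smt (verit) distrib_left mult.commute of_nat_0_le_iff mult_nonneg_nonneg)
  define q where "q = (\<lambda>c::nat. if c < k then p else 1 - real k * p)"
  have qnn: "\<And>c. 0 \<le> q c" unfolding q_def using assms(3) kp by auto
  have sq0: "(\<Sum>c<k. q c) = real k * p" unfolding q_def by simp
  have sumq: "(\<Sum>c\<in>{..k}. q c) = 1"
  proof -
    have "{..k} = insert k {..<k}" by auto
    then have "(\<Sum>c\<in>{..k}. q c) = q k + (\<Sum>c<k. q c)" by simp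
    then show ?thesis using sq0 unfolding q_def by simp
  qed
  have sumqi: "(\<Sum>c\<in>{..k} - {i}. q c) = 1 - p" if "i < k" for i
  proof -
    have "(\<Sum>c\<in>{..k}. q c) = q i + (\<Sum>c\<in>{..k} - {i}. q c)"
      using that by (intro sum.remove) auto
    then show ?thesis using sumq that unfolding q_def by simp
  qed
  have key: "rand_subset_prob p V' (\<lambda>U. \<not> disk_event H (C i) U) * real k < 1" if i: "i < k" for i
  proof -
    define A where "A = disk_event H (C i)"
    define Z where "Z = \<Union>(C i)"
    define Y where "Y = W - Z"
    have ZW: "Z \<subseteq> W" unfolding Z_def using CW[OF i] .
    have Vdec: "V = (V' \<union> Z) \<union> Y" unfolding V'_def Y_def using ZW WV by blast
    have disY: "(V' \<union> Z) \<inter> Y = {}" unfolding V'_def Y_def using ZW by blast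
    have finY: "finite Y" unfolding Y_def using finW by simp
    have finZ: "finite Z" using finite_subset[OF ZW finW] .
    have e1: "rand_subset_prob p V (\<lambda>U. \<not> A U) \<le> \<epsilon>"
      using assms(9)[OF i] RP_compl[OF finV, of p A] unfolding disk_coverable_def A_def V_def by simp
    have e2: "rand_subset_prob p V (\<lambda>U. \<not> A U \<and> U \<inter> Y = {}) \<le> rand_subset_prob p V (\<lambda>U. \<not> A U)"
      using assms(3,4) by (intro RP_mono) auto
    have e3: "rand_subset_prob p V (\<lambda>U. \<not> A U \<and> U \<inter> Y = {}) = (1 - p) ^ card Y * rand_subset_prob p (V' \<union> Z) (\<lambda>U. \<not> A U)"
      unfolding Vdec by (rule RP_restrict) (use finV' finZ finY disY in auto)
    have e4: "rand_subset_prob p (V' \<union> Z) (\<lambda>U. \<not> A U) = rand_subset_prob p V' (\<lambda>U. \<not> A U)"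
    proof (rule RP_indep)
      show "finite V'" "finite Z" by (fact finV', fact finZ)
      show "V' \<inter> Z = {}" unfolding V'_def using ZW by blast
      fix U assume U: "U \<subseteq> V' \<union> Z"
      have "A U = A (U \<inter> V')"
      proof -
        have "(interior_verts D \<subseteq> U) = (interior_verts D \<subseteq> U \<inter> V')" if "bd D = C i" for D
        proof -
          have "interior_verts D \<inter> Z = {}" unfolding interior_verts_def Z_def using that by auto
          then show ?thesis using U by blast
        qed
        then show ?thesis unfolding A_def disk_event_def by metis
      qed
      then show "(\<not> A U) = (\<not> A (U \<inter> V'))" by simp
    qed
    define P' where "P' = rand_subset_prob p V' (\<lambda>U. \<not> A U)"
    define c where "c = (1 - p) ^ card Y"
    have P'nn: "0 \<le> P'" unfolding P'_def using assms(3,4) by (intro RP_nonneg) auto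
    have cPe: "c * P' = rand_subset_prob p V (\<lambda>U. \<not> A U \<and> U \<inter> Y = {})"
      using e3 e4 unfolding c_def P'_def by simp
    have cP: "c * P' \<le> \<epsilon>" using e1 e2 cPe by linarith
    have cY: "card Y \<le> m" unfolding m_def Y_def using finW by (intro card_mono) auto
    have "1 + real (card Y) * (- p) \<le> (1 + - p) ^ card Y"
      by (rule Bernoulli_inequality) (use assms(4) in simp)
    then have c1: "c \<ge> 1 - real (card Y) * p" unfolding c_def by simp
    have c2: "real (card Y) * p \<le> real m * p" using cY assms(3) by (simp add: mult_right_mono)
    have c3': "(1 - real m * p) * (real k + real m) \<ge> real k"
    proof -
      have h: "real m * (p * (real k + real m)) \<le> real m * 1" by (rule mult_left_mono[OF pkm]) simp
      have eq: "(1 - real m * p) * (real k + real m) = (real k + real m) - real m * (p * (real k + real m))"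
        by algebra
      show ?thesis unfolding eq using h by linarith
    qed
    have c4: "c * (real k + real m) \<ge> real k"
    proof -
      have "c \<ge> 1 - real m * p" using c1 c2 by linarith
      then have "c * (real k + real m) \<ge> (1 - real m * p) * (real k + real m)"
        using km by (intro mult_right_mono) auto
      then show ?thesis using c3' by linarith
    qed
    have "P' * real k \<le> P' * (c * (real k + real m))" using c4 P'nn by (intro mult_left_mono) auto
    also have "\<dots> = (c * P') * (real k + real m)" by (simp add: algebra_simps)
    also have "\<dots> \<le> \<epsilon> * (real k + real m)" using cP km by (intro mult_right_mono) auto
    also have "\<dots> < 1"
    proof -
      have "\<epsilon> * (real k + real m) * 1 \<le> \<epsilon> * (real k + real m) * real k"
        by (rule mult_left_mono[OF k1]) (use assms(5) km in simp)
      moreover have "\<epsilon> * (real k + real m) * real k = \<epsilon> * (real k * (real k + real m))" by algebra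
      ultimately show ?thesis using ekm by linarith
    qed
    finally show ?thesis unfolding P'_def A_def .
  qed
  define F where "F = (\<lambda>i (g::'a \<Rightarrow> nat). disk_event H (C i) {v\<in>V'. g v = i})"
  have marg: "QS q k V' (\<lambda>g. \<not> F i g) = rand_subset_prob p V' (\<lambda>U. \<not> disk_event H (C i) U)" if "i < k" for i
    unfolding F_def using QS_marginal[OF finV', of i k q p "\<lambda>U. \<not> disk_event H (C i) U"] that sumqi[OF that]
    unfolding q_def by simp
  have "QS q k V' (\<lambda>g. \<exists>i<k. \<not> F i g) \<le> (\<Sum>i<k. QS q k V' (\<lambda>g. \<not> F i g))"
    by (rule QS_union_bound[OF qnn])
  also have "\<dots> = (\<Sum>i<k. rand_subset_prob p V' (\<lambda>U. \<not> disk_event H (C i) U))"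
    using marg by simp
  also have "\<dots> < (\<Sum>i<k. 1 / real k)"
  proof (rule sum_strict_mono)
    show "finite {..<k}" by simp
    show "{..<k} \<noteq> {}" using False by auto
    fix i assume "i \<in> {..<k}"
    then show "rand_subset_prob p V' (\<lambda>U. \<not> disk_event H (C i) U) < 1 / real k"
      using key[of i] k1 by (simp add: field_simps)
  qed
  also have "\<dots> = 1" using False by simp
  finally have lt: "QS q k V' (\<lambda>g. \<exists>i<k. \<not> F i g) < 1" .
  have "QS q k V' (\<lambda>g. \<forall>i<k. F i g) = 1 - QS q k V' (\<lambda>g. \<not> (\<forall>i<k. F i g))"
    by (rule QS_compl[OF finV' sumq])
  also have "(\<lambda>g. \<not> (\<forall>i<k. F i g)) = (\<lambda>g. \<exists>i<k. \<not> F i g)" by auto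
  finally have "QS q k V' (\<lambda>g. \<forall>i<k. F i g) > 0" using lt by simp
  then obtain g where g: "\<forall>i<k. F i g" using QS_pos_exists by blast
  define U where "U = (\<lambda>i. {v\<in>V'. g v = i})"
  have ev: "disk_event H (C i) (U i)" if "i < k" for i using g that unfolding F_def U_def by simp
  define D where "D = (\<lambda>i. SOME D. D \<subseteq> H \<and> is_disk D \<and> boundary_inducing D \<and> bd D = C i \<and> interior_verts D \<subseteq> U i)"
  have Dp: "D i \<subseteq> H \<and> is_disk (D i) \<and> boundary_inducing (D i) \<and> bd (D i) = C i \<and> interior_verts (D i) \<subseteq> U i"
    if "i < k" for i
    using someI_ex[OF ev[OF that, unfolded disk_event_def]] unfolding D_def by simp
  have UW: "U i \<inter> W = {}" for i unfolding U_def V'_def by auto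
  show ?thesis
  proof (intro exI[of _ D] conjI allI impI)
    fix i assume "i < k" then show "D i \<subseteq> H" "is_disk (D i)" "bd (D i) = C i" using Dp by auto
  next
    fix i j assume ij: "i < k" "j < k" "i \<noteq> j"
    show "simplices (D i) \<inter> simplices (D j) = graph_inter_complex (C i) (C j)"
    proof (rule pair_inter)
      show "is_disk (D i)" "boundary_inducing (D i)" "bd (D i) = C i" "interior_verts (D i) \<subseteq> U i"
        using Dp[OF ij(1)] by auto
      show "is_disk (D j)" "boundary_inducing (D j)" "bd (D j) = C j" "interior_verts (D j) \<subseteq> U j"
        using Dp[OF ij(2)] by auto
      show "U i \<inter> U j = {}" unfolding U_def using ij by auto
      show "U i \<inter> (\<Union>(C i) \<union> \<Union>(C j)) = {}" "U j \<inter> (\<Union>(C i) \<union> \<Union>(C j)) = {}"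
        using UW CW[OF ij(1)] CW[OF ij(2)] by blast+
    qed
  qed
qed

end
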